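(* Let $\Theta\subseteq\mathbb{R}^p$ be convex, and let $f:\mathbb{R}^p\to\mathbb{R}$ be continuous, convex and bounded below, with a minimizer $\theta^\star$ on $\Theta$; set $f^\star\triangleq f(\theta^\star)$. Let $\theta_0\in\Theta$ and assume there is $R>0$ with $\|\theta-\theta^\star\|_2\le R$ for all $\theta\in\Theta$ such that $f(\theta)\le f(\theta_0)$. Consider the sequence generated by: for $n\ge1$, choose $g_n\in\mathcal{S}_L(f,\theta_{n-1})$ and set $\theta_n\in\operatorname{arg\,min}_{\theta\in\Theta}g_n(\theta)$. Assume in addition that each $h_n\triangleq g_n-f$ is twice differentiable, that $\nabla^2 h_n$ is $M$-Lipschitz continuous, and that $\nabla^2h_n(\theta_{n-1})=0$ for all $n$. Then $$f(\theta_n)-f^\star\le\frac{9MR^3}{2(n+3)^2}\quad\text{for all }n\ge1.$$ If moreover $f$ is $\mu$-strongly convex, then $f(\theta_n)-f^\star$ converges to $0$ superlinearly with order $3/2$, i.e., there exist $C>0$ and $n_1$ such that $f(\theta_n)-f^\star\le C\,(f(\theta_{n-1})-f^\star)^{3/2}$ for all $n\ge n_1$.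
   Context: First-order surrogates: given convex $\Theta\subseteq\mathbb{R}^p$, $g:\mathbb{R}^p\to\mathbb{R}$ belongs to $\mathcal{S}_L(f,\kappa)$ if (a) $g(\theta')\ge f(\theta')$ for all $\theta'\in\operatorname{arg\,min}_{\theta\in\Theta}g(\theta)$, and (b) $h\triangleq g-f$ is differentiable on $\mathbb{R}^p$ with $L$-Lipschitz gradient, $h(\kappa)=0$ and $\nabla h(\kappa)=0$. The minimizers $\theta_n$ are assumed to exist. *)

theory Defs
  imports "HOL-Analysis.Analysis"
begin

definition argmin_on :: "'a set \<Rightarrow> ('a \<Rightarrow> real) \<Rightarrow> 'a set" where
  "argmin_on \<Theta> g = {\<theta> \<in> \<Theta>. \<forall>\<theta>'\<in>\<Theta>. g \<theta> \<le> g \<theta>'}"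

definition has_gradient_everywhere :: "('a::euclidean_space \<Rightarrow> real) \<Rightarrow> ('a \<Rightarrow> 'a) \<Rightarrow> bool" where
  "has_gradient_everywhere h G \<longleftrightarrow> (\<forall>x. (h has_derivative (\<lambda>v. G x \<bullet> v)) (at x))"

definition first_order_surrogates ::
  "'a::euclidean_space set \<Rightarrow> real \<Rightarrow> ('a \<Rightarrow> real) \<Rightarrow> 'a \<Rightarrow> ('a \<Rightarrow> real) set" where
  "first_order_surrogates \<Theta> L f \<kappa> =
     {g. (\<forall>\<theta>'\<in>argmin_on \<Theta> g. f \<theta>' \<le> g \<theta>') \<and>
         (\<exists>G. has_gradient_everywhere (\<lambda>x. g x - f x) G \<and>
              (\<forall>x y. norm (G x - G y) \<le> L * norm (x - y)) \<and>
              g \<kappa> - f \<kappa> = 0 \<and> G \<kappa> = 0)}"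

definition strongly_convex :: "real \<Rightarrow> ('a::euclidean_space \<Rightarrow> real) \<Rightarrow> bool" where
  "strongly_convex \<mu> f \<longleftrightarrow> \<mu> > 0 \<and> convex_on UNIV (\<lambda>x. f x - \<mu> / 2 * (norm x)\<^sup>2)"

end

theory Submission imports Defs begin

lemma taylor3:
  fixes h :: "'a::euclidean_space \<Rightarrow> real" and G :: "'a \<Rightarrow> 'a" and H :: "'a \<Rightarrow> 'a \<Rightarrow> 'a"
  assumes hd: "\<forall>x. (h has_derivative (\<lambda>v. G x \<bullet> v)) (at x)"
    and Gd: "\<forall>x. (G has_derivative H x) (at x)"
    and lip: "\<forall>x y. onorm (\<lambda>v. H x v - H y v) \<le> M * norm (x - y)"
    and h0: "h k = 0" and G0: "G k = 0" and H0: "\<forall>v. H k v = 0"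
  shows "h x \<le> M / 6 * norm (x - k) ^ 3"
proof -
  define y where "y = x - k"
  define c where "c = M * norm y ^ 3"
  have lin: "((\<lambda>t. k + t *\<^sub>R y) has_derivative (\<lambda>s. s *\<^sub>R y)) (at t)" for t
    by (auto intro!: derivative_eq_intros)
  have psid: "((\<lambda>t. G (k + t *\<^sub>R y) \<bullet> y) has_real_derivative (H (k + t *\<^sub>R y) y \<bullet> y)) (at t)" for t
  proof -
    have bl: "bounded_linear (H (k + t *\<^sub>R y))" using Gd has_derivative_bounded_linear by blast
    have "((\<lambda>t. G (k + t *\<^sub>R y)) has_derivative (\<lambda>s. H (k + t *\<^sub>R y) (s *\<^sub>R y))) (at t)"
      using has_derivative_compose[OF lin, of G] Gd by (auto simp: o_def)
    then have "((\<lambda>t. G (k + t *\<^sub>R y) \<bullet> y) has_derivative (\<lambda>s. H (k + t *\<^sub>R y) (s *\<^sub>R y) \<bullet> y)) (at t)"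
      by (rule has_derivative_inner_left)
    moreover have "(\<lambda>s. H (k + t *\<^sub>R y) (s *\<^sub>R y) \<bullet> y) = (\<lambda>s. s * (H (k + t *\<^sub>R y) y \<bullet> y))"
      using linear_scale[OF bounded_linear.linear[OF bl]] by auto
    moreover have "(\<lambda>s. s * (H (k + t *\<^sub>R y) y \<bullet> y)) = (*) (H (k + t *\<^sub>R y) y \<bullet> y)"
      by (rule ext) simp
    ultimately show ?thesis by (simp add: has_field_derivative_def)
  qed
  have phid: "((\<lambda>t. h (k + t *\<^sub>R y)) has_real_derivative (G (k + t *\<^sub>R y) \<bullet> y)) (at t)" for t
  proof -
    have "((\<lambda>t. h (k + t *\<^sub>R y)) has_derivative (\<lambda>s. G (k + t *\<^sub>R y) \<bullet> (s *\<^sub>R y))) (at t)"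
      using has_derivative_compose[OF lin[of t] hd[rule_format, of "k + t *\<^sub>R y"]] by (simp add: o_def)
    moreover have "(\<lambda>s. G (k + t *\<^sub>R y) \<bullet> (s *\<^sub>R y)) = (*) (G (k + t *\<^sub>R y) \<bullet> y)"
      by (rule ext) simp
    ultimately show ?thesis by (simp add: has_field_derivative_def)
  qed
  have bnd: "H (k + t *\<^sub>R y) y \<bullet> y \<le> c * t" if "0 \<le> t" for t
  proof -
    have bl: "bounded_linear (\<lambda>v. H (k + t *\<^sub>R y) v - H k v)"
      using Gd has_derivative_bounded_linear bounded_linear_sub by blast
    have "H (k + t *\<^sub>R y) y \<bullet> y \<le> norm (H (k + t *\<^sub>R y) y - H k y) * norm y"
      using H0 norm_cauchy_schwarz by simp
    also have "\<dots> \<le> onorm (\<lambda>v. H (k + t *\<^sub>R y) v - H k v) * norm y * norm y"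
      by (rule mult_right_mono[OF onorm[OF bl]]) simp
    also have "\<dots> \<le> M * norm (t *\<^sub>R y) * norm y * norm y"
      using lip[rule_format, of "k + t *\<^sub>R y" k] by (simp add: mult_right_mono)
    also have "\<dots> = c * t" using that by (simp add: c_def power3_eq_cube)
    finally show ?thesis .
  qed
  have psi: "G (k + t *\<^sub>R y) \<bullet> y \<le> c * t^2 / 2" if "0 \<le> t" for t
  proof -
    define F where "F = (\<lambda>t. c * t^2/2 - G (k + t *\<^sub>R y) \<bullet> y)"
    have "F 0 \<le> F t"
    proof (rule DERIV_nonneg_imp_nondecreasing[OF that])
      fix s assume "0 \<le> s" "s \<le> t"
      show "\<exists>d. (F has_real_derivative d) (at s) \<and> d \<ge> 0" unfolding F_def
        apply (rule exI[of _ "c * s - H (k + s *\<^sub>R y) y \<bullet> y"])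
        using bnd[OF \<open>0 \<le> s\<close>] psid[of s]
        by (auto intro!: derivative_eq_intros)
    qed
    then show ?thesis using G0 by (simp add: F_def)
  qed
  define P where "P = (\<lambda>t. c * t^3/6 - h (k + t *\<^sub>R y))"
  have "P 0 \<le> P 1"
  proof (rule DERIV_nonneg_imp_nondecreasing[of 0 1 P])
    fix s :: real assume "0 \<le> s" "s \<le> 1"
    show "\<exists>d. (P has_real_derivative d) (at s) \<and> d \<ge> 0" unfolding P_def
      apply (rule exI[of _ "c * s^2/2 - G (k + s *\<^sub>R y) \<bullet> y"])
      using psi[OF \<open>0 \<le> s\<close>] phid[of s]
      by (auto intro!: derivative_eq_intros)
  qed simp
  then show ?thesis using h0 by (simp add: P_def c_def y_def)
qed


lemma coeff_ineq: "(x::real) \<ge> 1 \<Longrightarrow> x * (x+3)^2 \<le> (x+2)^3 \<Longrightarrow> x/(x+3) * (9 / (2 * (x + 2)^2)) + (3/(x+3))^3 / 6 \<le> 9 / (2 * (x + 3)^2)"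
proof -
  assume x: "x \<ge> 1" and c: "x * (x+3)^2 \<le> (x+2)^3"
  have p: "x + 2 > 0" "x + 3 > 0" using x by auto
  have gen: "x/b * (9 / (2 * a^2)) + (3/b)^3 / 6 = 9 / (2 * b^3) * (x * b^2 / a^2 + 1)" if "a > 0" "b > 0" for a b :: real
    using that by (simp add: field_simps power2_eq_square power3_eq_cube)
  have "x/(x+3) * (9 / (2 * (x + 2)^2)) + (3/(x+3))^3 / 6 = 9 / (2 * (x + 3)^3) * (x * (x+3)^2 / (x+2)^2 + 1)"
    by (rule gen[OF p])
  also have "x * (x+3)^2 / (x+2)^2 \<le> x + 2"
  proof -
    have g2: "y / a^2 \<le> a" if "a > 0" "y \<le> a^3" for a y :: real
      using that by (simp add: pos_divide_le_eq power2_eq_square power3_eq_cube)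
    show ?thesis by (rule g2[OF p(1) c])
  qed
  then have "9 / (2 * (x + 3)^3) * (x * (x+3)^2 / (x+2)^2 + 1) \<le> 9 / (2 * (x + 3)^3) * (x + 3)"
    using p by (intro mult_left_mono) auto
  also have "\<dots> = 9 / (2 * (x + 3)^2)"
  proof -
    have g3: "9 / (2 * b^3) * b = 9 / (2 * b^2)" if "b > 0" for b :: real
      using that by (simp add: field_simps power2_eq_square power3_eq_cube)
    show ?thesis by (rule g3[OF p(2)])
  qed
  finally show ?thesis .
qed

lemma rate_step:
  fixes x D d :: real
  assumes x: "x \<ge> 1" and D: "D \<ge> 0" and d: "d \<le> 9 * D / (2 * (x + 2)^2)"
  shows "(1 - 3/(x+3)) * d + D * (3/(x+3))^3 / 6 \<le> 9 * D / (2 * (x + 3)^2)"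
proof -
  have a: "1 - 3/(x+3) = x/(x+3)" using x by (simp add: field_simps)
  have "(1 - 3/(x+3)) * d \<le> x/(x+3) * (9 * D / (2 * (x + 2)^2))"
    unfolding a by (rule mult_left_mono[OF d]) (use x in simp)
  moreover have "x/(x+3) * (9 * D / (2 * (x + 2)^2)) + D * (3/(x+3))^3 / 6 \<le> 9 * D / (2 * (x + 3)^2)"
  proof -
    have c: "x * (x+3)^2 \<le> (x+2)^3" using x by (simp add: power2_eq_square power3_eq_cube algebra_simps)
    have "x/(x+3) * (9 / (2 * (x + 2)^2)) + (3/(x+3))^3 / 6 \<le> 9 / (2 * (x + 3)^2)"
      using x c by (rule coeff_ineq)
    from mult_left_mono[OF this D] show ?thesis by (simp add: algebra_simps)
  qed
  ultimately show ?thesis by linarith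
qed

lemma cube_powr: "z \<ge> 0 \<Longrightarrow> (z::real)^3 = (z^2) powr (3/2)"
proof (cases "z = 0")
  case False
  assume "z \<ge> 0"
  then have "z > 0" using False by simp
  then have "(z^2) powr (3/2) = (z powr 2) powr (3/2)" by simp
  also have "\<dots> = z powr 3" by (simp add: powr_powr)
  also have "\<dots> = z^3" using \<open>z > 0\<close> by simp
  finally show ?thesis by simp
qed simp

theorem proposition2p4:
  fixes \<Theta> :: "'a::euclidean_space set"
    and f :: "'a \<Rightarrow> real"
    and \<theta>star :: 'a
    and R L M :: real
    and g :: "nat \<Rightarrow> 'a \<Rightarrow> real"
    and \<theta> :: "nat \<Rightarrow> 'a"
    and G :: "nat \<Rightarrow> 'a \<Rightarrow> 'a"
    and H :: "nat \<Rightarrow> 'a \<Rightarrow> 'a \<Rightarrow> 'a"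
  assumes convex_Theta: "convex \<Theta>"
    and f_cont: "continuous_on UNIV f"
    and f_convex: "convex_on UNIV f"
    and f_bdd: "bdd_below (range f)"
    and star_in: "\<theta>star \<in> \<Theta>"
    and star_min: "\<forall>\<theta>'\<in>\<Theta>. f \<theta>star \<le> f \<theta>'"
    and theta0_in: "\<theta> 0 \<in> \<Theta>"
    and R_pos: "R > 0"
    and level_bdd: "\<forall>x\<in>\<Theta>. f x \<le> f (\<theta> 0) \<longrightarrow> norm (x - \<theta>star) \<le> R"
    and surr: "\<forall>n\<ge>1. g n \<in> first_order_surrogates \<Theta> L f (\<theta> (n - 1))"
    and minim: "\<forall>n\<ge>1. \<theta> n \<in> argmin_on \<Theta> (g n)"
    and grad: "\<forall>n\<ge>1. has_gradient_everywhere (\<lambda>x. g n x - f x) (G n)"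
    and hess: "\<forall>n\<ge>1. \<forall>x. (G n has_derivative H n x) (at x)"
    and hess_lip: "\<forall>n\<ge>1. \<forall>x y. onorm (\<lambda>v. H n x v - H n y v) \<le> M * norm (x - y)"
    and hess_zero: "\<forall>n\<ge>1. \<forall>v. H n (\<theta> (n - 1)) v = 0"
  shows "(\<forall>n\<ge>1. f (\<theta> n) - f \<theta>star \<le> 9 * M * R ^ 3 / (2 * (real n + 3)\<^sup>2))
       \<and> (\<forall>\<mu>. strongly_convex \<mu> f \<longrightarrow>
            (\<exists>C>0. \<exists>n1. \<forall>n\<ge>n1.
               f (\<theta> n) - f \<theta>star \<le> C * (f (\<theta> (n - 1)) - f \<theta>star) powr (3/2)))"
proof -
  have thin: "\<theta> k \<in> \<Theta>" for k
    using minim theta0_in by (cases k) (auto simp: argmin_on_def)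
  have key: "f (\<theta> n) \<le> f x + M / 6 * norm (x - \<theta> (n - 1)) ^ 3" if n: "n \<ge> 1" and x: "x \<in> \<Theta>" for n x
  proof -
    obtain G' where gr': "has_gradient_everywhere (\<lambda>x. g n x - f x) G'"
      and h0: "g n (\<theta> (n - 1)) - f (\<theta> (n - 1)) = 0" and G'0: "G' (\<theta> (n - 1)) = 0"
      and am: "\<forall>\<theta>'\<in>argmin_on \<Theta> (g n). f \<theta>' \<le> g n \<theta>'"
      using surr n unfolding first_order_surrogates_def by blast
    have gr: "\<forall>x. ((\<lambda>x. g n x - f x) has_derivative (\<lambda>v. G n x \<bullet> v)) (at x)"
      using grad n unfolding has_gradient_everywhere_def by blast
    have "(\<lambda>v. G n (\<theta> (n - 1)) \<bullet> v) = (\<lambda>v. G' (\<theta> (n - 1)) \<bullet> v)"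
      using has_derivative_unique gr gr' unfolding has_gradient_everywhere_def by blast
    then have "G n (\<theta> (n - 1)) \<bullet> G n (\<theta> (n - 1)) = 0"
      using G'0 by (metis inner_zero_left)
    then have G0: "G n (\<theta> (n - 1)) = 0" by simp
    have "g n x - f x \<le> M / 6 * norm (x - \<theta> (n - 1)) ^ 3"
      by (rule taylor3[where G="G n" and H="H n"]) (use gr hess hess_lip hess_zero n h0 G0 in auto)
    moreover have "f (\<theta> n) \<le> g n (\<theta> n)" using am minim n by auto
    moreover have "g n (\<theta> n) \<le> g n x" using minim n x by (auto simp: argmin_on_def)
    ultimately show ?thesis by linarith
  qed
  have M0: "M \<ge> 0"
  proof -
    obtain b :: 'a where b: "b \<in> Basis" using nonempty_Basis by blast
    have bl: "bounded_linear (\<lambda>v. H 1 b v - H 1 0 v)"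
      using hess has_derivative_bounded_linear bounded_linear_sub by blast
    have "0 \<le> onorm (\<lambda>v. H 1 b v - H 1 0 v)" by (rule onorm_pos_le[OF bl])
    also have "\<dots> \<le> M * norm (b - 0)" using hess_lip[rule_format, of 1 b 0] by simp
    finally show ?thesis using b by simp
  qed
  have mono: "f (\<theta> n) \<le> f (\<theta> (n - 1))" if "n \<ge> 1" for n
    using key[OF that thin[of "n - 1"]] by simp
  have lev: "f (\<theta> k) \<le> f (\<theta> 0)" for k
  proof (induction k)
    case (Suc k) then show ?case using mono[of "Suc k"] by simp
  qed simp
  have Rb: "norm (\<theta> k - \<theta>star) \<le> R" for k using level_bdd thin lev by blast
  have step: "f (\<theta> n) - f \<theta>star \<le> (1 - a) * (f (\<theta> (n - 1)) - f \<theta>star) + M * R^3 * a^3 / 6"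
    if n: "n \<ge> 1" and a: "0 \<le> a" "a \<le> 1" for n a
  proof -
    define x where "x = (1 - a) *\<^sub>R \<theta> (n - 1) + a *\<^sub>R \<theta>star"
    have xin: "x \<in> \<Theta>" unfolding x_def using convexD_alt[OF convex_Theta thin star_in a] .
    have fx: "f x \<le> (1 - a) * f (\<theta> (n - 1)) + a * f \<theta>star"
      unfolding x_def using convex_onD[OF f_convex a] by simp
    have "x - \<theta> (n - 1) = a *\<^sub>R (\<theta>star - \<theta> (n - 1))" unfolding x_def by (simp add: algebra_simps)
    then have "norm (x - \<theta> (n - 1)) = a * norm (\<theta> (n - 1) - \<theta>star)"
      using a by (simp add: norm_minus_commute)
    also have "\<dots> \<le> a * R" using Rb a by (simp add: mult_left_mono)
    finally have "norm (x - \<theta> (n - 1)) ^ 3 \<le> (a * R) ^ 3" by (simp add: power_mono)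
    then have "M / 6 * norm (x - \<theta> (n - 1)) ^ 3 \<le> M / 6 * (a * R) ^ 3"
      using M0 by (simp add: mult_left_mono)
    then show ?thesis using key[OF n xin] fx by (simp add: algebra_simps power_mult_distrib)
  qed
  have part1: "f (\<theta> n) - f \<theta>star \<le> 9 * M * R ^ 3 / (2 * (real n + 3)\<^sup>2)" if "n \<ge> 1" for n
    using that
  proof (induction n)
    case 0 then show ?case by simp
  next
    case (Suc m)
    show ?case
    proof (cases "m = 0")
      case True
      have "f (\<theta> 1) - f \<theta>star \<le> M * R^3 / 6" using step[of 1 1] by simp
      also have "\<dots> \<le> 9 * M * R ^ 3 / (2 * (real 1 + 3)\<^sup>2)" using M0 R_pos by simp
      finally show ?thesis using True by simp
    next
      case False
      then have m1: "m \<ge> 1" by simp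
      have IH: "f (\<theta> m) - f \<theta>star \<le> 9 * (M * R^3) / (2 * (real m + 3)^2)"
        using Suc.IH[OF m1] by (simp add: add.commute mult.assoc)
      have a: "0 \<le> 3 / (real m + 4)" "3 / (real m + 4) \<le> 1" by auto
      have "f (\<theta> (Suc m)) - f \<theta>star \<le> (1 - 3/(real m + 4)) * (f (\<theta> m) - f \<theta>star) + M * R^3 * (3/(real m + 4))^3 / 6"
        using step[OF _ a, of "Suc m"] by simp
      also have "\<dots> \<le> 9 * (M * R^3) / (2 * (real m + 4)^2)"
        using rate_step[of "real m + 1" "M * R^3" "f (\<theta> m) - f \<theta>star"] IH m1 M0 R_pos
        by (simp add: algebra_simps)
      finally show ?thesis by (simp add: algebra_simps)
    qed
  qed
  have part2: "\<exists>C>0. \<exists>n1. \<forall>n\<ge>n1. f (\<theta> n) - f \<theta>star \<le> C * (f (\<theta> (n - 1)) - f \<theta>star) powr (3/2)"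
    if sc: "strongly_convex \<mu> f" for \<mu>
  proof -
    have mu: "\<mu> > 0" and cv: "convex_on UNIV (\<lambda>x. f x - \<mu> / 2 * (norm x)\<^sup>2)"
      using sc unfolding strongly_convex_def by auto
    have qg: "norm (x - \<theta>star)^2 \<le> 4 / \<mu> * (f x - f \<theta>star)" if x: "x \<in> \<Theta>" for x
    proof -
      define m where "m = (1 - 1/2) *\<^sub>R \<theta>star + (1/2::real) *\<^sub>R x"
      have "m \<in> \<Theta>" unfolding m_def by (rule convexD_alt[OF convex_Theta star_in x]) auto
      then have fm: "f \<theta>star \<le> f m" using star_min by auto
      have c: "f m - \<mu> / 2 * (norm m)\<^sup>2 \<le> (1 - 1/2) * (f \<theta>star - \<mu> / 2 * (norm \<theta>star)\<^sup>2) + 1/2 * (f x - \<mu> / 2 * (norm x)\<^sup>2)"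
        unfolding m_def using convex_onD[OF cv, of "1/2" \<theta>star x] by simp
      have id: "(norm \<theta>star)\<^sup>2 / 2 + (norm x)\<^sup>2 / 2 - (norm m)\<^sup>2 = (norm (x - \<theta>star))\<^sup>2 / 4"
        unfolding m_def by (simp add: power2_norm_eq_inner inner_add inner_diff algebra_simps inner_commute)
      have "\<mu> / 4 * (norm (x - \<theta>star))\<^sup>2 \<le> f x - f \<theta>star"
      proof -
        have "\<mu> * ((norm \<theta>star)\<^sup>2 / 2 + (norm x)\<^sup>2 / 2 - (norm m)\<^sup>2) = \<mu> * ((norm (x - \<theta>star))\<^sup>2 / 4)"
          using id by simp
        then show ?thesis using c fm by (simp add: algebra_simps)
      qed
      then show ?thesis using mu by (simp add: field_simps)
    qed
    define C where "C = (M + 1) / 6 * (4 / \<mu>) powr (3/2)"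
    have Cpos: "C > 0" unfolding C_def using M0 mu by simp
    have "f (\<theta> n) - f \<theta>star \<le> C * (f (\<theta> (n - 1)) - f \<theta>star) powr (3/2)" if n: "n \<ge> 1" for n
    proof -
      define d where "d = f (\<theta> (n - 1)) - f \<theta>star"
      have d0: "d \<ge> 0" unfolding d_def using star_min thin by auto
      have "f (\<theta> n) - f \<theta>star \<le> M / 6 * norm (\<theta>star - \<theta> (n - 1)) ^ 3"
        using key[OF n star_in] by simp
      also have "norm (\<theta>star - \<theta> (n - 1)) ^ 3 = (norm (\<theta> (n - 1) - \<theta>star) ^ 2) powr (3/2)"
        by (simp add: norm_minus_commute cube_powr)
      also have "\<dots> \<le> (4 / \<mu> * d) powr (3/2)"
        using qg[OF thin] by (intro powr_mono2) (auto simp: d_def)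
      also have "\<dots> = (4 / \<mu>) powr (3/2) * d powr (3/2)" by (rule powr_mult)
      finally have "f (\<theta> n) - f \<theta>star \<le> M / 6 * ((4 / \<mu>) powr (3/2) * d powr (3/2))"
        using M0 by (simp add: mult_left_mono)
      also have "\<dots> \<le> (M + 1) / 6 * ((4 / \<mu>) powr (3/2) * d powr (3/2))"
        by (rule mult_right_mono) auto
      finally show ?thesis unfolding C_def d_def by (simp add: mult.assoc)
    qed
    then show ?thesis using Cpos by blast
  qed
  show ?thesis using part1 part2 by blast
qed

end
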